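(* Let $A$ be a finite set, $n\ge3$, let $\rho\subseteq A^n$ be a strongly rich relation preserved by a WNU vector-function $(f_1,\dots,f_n)$, and let $\sigma\subseteq A^m$, $m\ge3$, be a totally reflexive relation preserved by $f_1$. Then $\sigma=A^m$.
   Context: $\rho\subseteq A^n$ is strongly rich if for every $(a_1,\dots,a_n)\in A^n$ and every $j$ there is a unique $b\in A$ with $(a_1,\dots,a_{j-1},b,a_{j+1},\dots,a_n)\in\rho$. $\sigma\subseteq A^m$ is totally reflexive if it contains every $(a_1,\dots,a_m)$ with $|\{a_1,\dots,a_m\}|<m$. A WNU is a $k$-ary ($k\ge2$) operation $f$ with $f(x,\dots,x)=x$ and $f(y,x,\dots,x)=f(x,y,x,\dots,x)=\dots=f(x,\dots,x,y)$; a WNU vector-function is a tuple $(f_1,\dots,f_n)$ of $k$-ary WNUs, preserving $\rho$ if applying $f_i$ to the $i$-th coordinates of any $k$ tuples of $\rho$ yields a tuple in $\rho$; a single operation preserves $\sigma$ if applying it coordinatewise to tuples of $\sigma$ yields a tuple of $\sigma$. *)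

theory Defs
  imports Main
begin

definition tuples :: "'a set \<Rightarrow> nat \<Rightarrow> 'a list set" where
  "tuples A n = {xs. length xs = n \<and> set xs \<subseteq> A}"

definition strongly_rich :: "'a set \<Rightarrow> nat \<Rightarrow> 'a list set \<Rightarrow> bool" where
  "strongly_rich A n \<rho> \<longleftrightarrow> \<rho> \<subseteq> tuples A n \<and>
     (\<forall>a \<in> tuples A n. \<forall>j < n. \<exists>!b. b \<in> A \<and> a[j := b] \<in> \<rho>)"

definition totally_reflexive :: "'a set \<Rightarrow> nat \<Rightarrow> 'a list set \<Rightarrow> bool" where
  "totally_reflexive A m \<sigma> \<longleftrightarrow> \<sigma> \<subseteq> tuples A m \<and>
     (\<forall>a \<in> tuples A m. card (set a) < m \<longrightarrow> a \<in> \<sigma>)"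

definition is_op :: "'a set \<Rightarrow> nat \<Rightarrow> ('a list \<Rightarrow> 'a) \<Rightarrow> bool" where
  "is_op A k f \<longleftrightarrow> (\<forall>xs \<in> tuples A k. f xs \<in> A)"

definition is_wnu :: "'a set \<Rightarrow> nat \<Rightarrow> ('a list \<Rightarrow> 'a) \<Rightarrow> bool" where
  "is_wnu A k f \<longleftrightarrow> k \<ge> 2 \<and> is_op A k f \<and>
     (\<forall>x \<in> A. f (replicate k x) = x) \<and>
     (\<forall>x \<in> A. \<forall>y \<in> A. \<forall>i < k. \<forall>j < k.
        f ((replicate k x)[i := y]) = f ((replicate k x)[j := y]))"

(* The vector-function (f_0,...,f_{n-1}) of k-ary operations preserves \<rho>:
   applying f_i to the i-th coordinates of any k tuples of \<rho> gives a tuple of \<rho>. *)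
definition vec_preserves :: "nat \<Rightarrow> nat \<Rightarrow> (nat \<Rightarrow> 'a list \<Rightarrow> 'a) \<Rightarrow> 'a list set \<Rightarrow> bool" where
  "vec_preserves n k f \<rho> \<longleftrightarrow>
     (\<forall>ts. length ts = k \<and> set ts \<subseteq> \<rho> \<longrightarrow>
        map (\<lambda>i. f i (map (\<lambda>t. t ! i) ts)) [0..<n] \<in> \<rho>)"

definition preserves :: "nat \<Rightarrow> nat \<Rightarrow> ('a list \<Rightarrow> 'a) \<Rightarrow> 'a list set \<Rightarrow> bool" where
  "preserves m k g \<sigma> \<longleftrightarrow> vec_preserves m k (\<lambda>_. g) \<sigma>"

end

theory Submission
  imports Defs
begin


lemma V_cong: "(\<And>i. i<k \<Longrightarrow> f i = g i) \<Longrightarrow> map f [0..<k] = map g [0..<k]"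
  by simp

lemma rep_upd: "j<k \<Longrightarrow> (replicate k c)[j:=x] = map (\<lambda>i. if i=j then x else c) [0..<k]"
  by (rule nth_equalityI) auto

lemma surj_core:
  fixes A :: "'a set" and k :: nat and mul :: "'a \<Rightarrow> 'a \<Rightarrow> 'a" and Fa Fb Fc :: "'a list \<Rightarrow> 'a"
  assumes k: "k \<ge> 1"
  and mulA: "\<And>x y. x\<in>A \<Longrightarrow> y\<in>A \<Longrightarrow> mul x y \<in> A"
  and lsolve: "\<And>x z. x\<in>A \<Longrightarrow> z\<in>A \<Longrightarrow> \<exists>y\<in>A. mul x y = z"
  and rsolve: "\<And>y z. y\<in>A \<Longrightarrow> z\<in>A \<Longrightarrow> \<exists>x\<in>A. mul x y = z"
  and lcanc: "\<And>x y y'. x\<in>A \<Longrightarrow> y\<in>A \<Longrightarrow> y'\<in>A \<Longrightarrow> mul x y = mul x y' \<Longrightarrow> y = y'"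
  and rcanc: "\<And>x x' y. x\<in>A \<Longrightarrow> x'\<in>A \<Longrightarrow> y\<in>A \<Longrightarrow> mul x y = mul x' y \<Longrightarrow> x = x'"
  and op0: "\<And>v. (\<forall>i<k. v i \<in> A) \<Longrightarrow> Fa (map v [0..<k]) \<in> A"
  and op1: "\<And>v. (\<forall>i<k. v i \<in> A) \<Longrightarrow> Fb (map v [0..<k]) \<in> A"
  and idem0: "\<And>c. c\<in>A \<Longrightarrow> Fa (replicate k c) = c"
  and idem1: "\<And>c. c\<in>A \<Longrightarrow> Fb (replicate k c) = c"
  and idem2: "\<And>c. c\<in>A \<Longrightarrow> Fc (replicate k c) = c"
  and wnu0: "\<And>c x i j. c\<in>A \<Longrightarrow> x\<in>A \<Longrightarrow> i<k \<Longrightarrow> j<k \<Longrightarrow>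
       Fa ((replicate k c)[i:=x]) = Fa ((replicate k c)[j:=x])"
  and H: "\<And>x y. (\<forall>i<k. x i \<in> A) \<Longrightarrow> (\<forall>i<k. y i \<in> A) \<Longrightarrow>
       Fc (map (\<lambda>i. mul (x i) (y i)) [0..<k]) = mul (Fa (map x [0..<k])) (Fb (map y [0..<k]))"
  and aA: "a\<in>A" and tA: "t\<in>A"
  shows "\<exists>u\<in>A. Fa ((replicate k a)[0:=u]) = t"
proof -
  have L1: "Fc (map (\<lambda>i. mul c (y i)) [0..<k]) = mul c (Fb (map y [0..<k]))"
    if "c\<in>A" "\<forall>i<k. y i \<in> A" for c y
    using H[of "\<lambda>_. c" y] idem0[of c] that by (simp add: map_replicate_const)
  have L2: "Fc (map (\<lambda>i. mul (x i) c) [0..<k]) = mul (Fa (map x [0..<k])) c"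
    if "c\<in>A" "\<forall>i<k. x i \<in> A" for c x
    using H[of x "\<lambda>_. c"] idem1[of c] that by (simp add: map_replicate_const)
  define Im where "Im p = {Fc (map (\<lambda>i. if i=0 then x else p) [0..<k]) | x. x\<in>A}" for p
  have Q: "\<forall>p\<in>A. \<forall>q\<in>A. Fc (map (\<lambda>i. if i<j then p else q) [0..<k]) \<in> Im p" if "j \<le> k" for j
    using that
  proof (induction j rule: inc_induct)
    case base
    show ?case
    proof (intro ballI)
      fix p q assume pq: "p\<in>A" "q\<in>A"
      have "map (\<lambda>i. if i<k then p else q) [0..<k] = map (\<lambda>i. if i=0 then p else p) [0..<k]"
        by (rule V_cong) auto
      moreover have "map (\<lambda>i. if i=0 then p else p) [0..<k] = replicate k p"
        by (simp add: map_replicate_const)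
      have "Fc (map (\<lambda>i. if i<k then p else q) [0..<k]) = Fc (map (\<lambda>i. if i=0 then p else p) [0..<k])"
        by (rule arg_cong[where f=Fc]) (rule V_cong, auto)
      then show "Fc (map (\<lambda>i. if i<k then p else q) [0..<k]) \<in> Im p"
        unfolding Im_def using pq by blast
    qed
  next
    case (step n)
    show ?case
    proof (intro ballI)
      fix p q assume pA: "p\<in>A" and qA: "q\<in>A"
      obtain p' where p': "p'\<in>A" "mul p p' = p" using lsolve[OF pA pA] by blast
      obtain q' where q': "q'\<in>A" "mul p q' = q" using lsolve[OF pA qA] by blast
      obtain d where d: "d\<in>A" "mul d p' = q" using rsolve[OF p'(1) qA] by blast
      define X where "X = (\<lambda>i::nat. if i=n then d else p)"
      define Y where "Y = (\<lambda>i::nat. if i < Suc n then p' else q')"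
      have XA: "\<forall>i<k. X i \<in> A" using pA d by (simp add: X_def)
      have YA: "\<forall>i<k. Y i \<in> A" using p' q' by (simp add: Y_def)
      have e1: "map (\<lambda>i. if i<n then p else q) [0..<k] = map (\<lambda>i. mul (X i) (Y i)) [0..<k]"
        by (rule V_cong) (auto simp: X_def Y_def p' q' d)
      have h1: "Fc (map (\<lambda>i. if i<n then p else q) [0..<k]) = mul (Fa (map X [0..<k])) (Fb (map Y [0..<k]))"
        unfolding e1 by (rule H[OF XA YA])
      from step.IH pA qA obtain y where y: "y\<in>A"
        "Fc (map (\<lambda>i. if i<Suc n then p else q) [0..<k]) = Fc (map (\<lambda>i. if i=0 then y else p) [0..<k])"
        unfolding Im_def by blast
      obtain x where x: "x\<in>A" "mul p x = y" using lsolve[OF pA y(1)] by blast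
      define Z where "Z = (\<lambda>i::nat. if i=0 then x else p')"
      have ZA: "\<forall>i<k. Z i \<in> A" using x p' by (simp add: Z_def)
      have e2: "map (\<lambda>i. if i<Suc n then p else q) [0..<k] = map (\<lambda>i. mul p (Y i)) [0..<k]"
        by (rule V_cong) (auto simp: Y_def p' q')
      have h2: "Fc (map (\<lambda>i. if i<Suc n then p else q) [0..<k]) = mul p (Fb (map Y [0..<k]))"
        unfolding e2 by (rule L1[OF pA YA])
      have e3: "map (\<lambda>i. if i=0 then y else p) [0..<k] = map (\<lambda>i. mul p (Z i)) [0..<k]"
        by (rule V_cong) (auto simp: Z_def p' x)
      have h3: "Fc (map (\<lambda>i. if i=0 then y else p) [0..<k]) = mul p (Fb (map Z [0..<k]))"
        unfolding e3 by (rule L1[OF pA ZA])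
      have YZ: "Fb (map Y [0..<k]) = Fb (map Z [0..<k])"
        using lcanc[OF pA op1[OF YA] op1[OF ZA]] h2 h3 y(2) by simp
      define X0 where "X0 = (\<lambda>i::nat. if i=0 then d else p)"
      have X0A: "\<forall>i<k. X0 i \<in> A" using pA d by (simp add: X0_def)
      have "map X [0..<k] = (replicate k p)[n:=d]" using rep_upd[of n k p d] step.hyps
        by (simp add: X_def)
      moreover have "map X0 [0..<k] = (replicate k p)[0:=d]" using rep_upd[of 0 k p d] step.hyps
        by (simp add: X0_def)
      ultimately have XX0: "Fa (map X [0..<k]) = Fa (map X0 [0..<k])"
        using wnu0[OF pA d(1), of n 0] step.hyps by simp
      have e4: "map (\<lambda>i. if i=0 then mul d x else p) [0..<k] = map (\<lambda>i. mul (X0 i) (Z i)) [0..<k]"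
        by (rule V_cong) (auto simp: X0_def Z_def p')
      have h4: "Fc (map (\<lambda>i. if i=0 then mul d x else p) [0..<k]) = mul (Fa (map X0 [0..<k])) (Fb (map Z [0..<k]))"
        unfolding e4 by (rule H[OF X0A ZA])
      have "Fc (map (\<lambda>i. if i<n then p else q) [0..<k]) = Fc (map (\<lambda>i. if i=0 then mul d x else p) [0..<k])"
        using h1 h4 XX0 YZ by simp
      moreover have "mul d x \<in> A" using mulA d x by simp
      ultimately show "Fc (map (\<lambda>i. if i<n then p else q) [0..<k]) \<in> Im p"
        unfolding Im_def by blast
    qed
  qed
  have aa: "mul a a \<in> A" using mulA aA by simp
  have ta: "mul t a \<in> A" using mulA aA tA by simp
  have "Fc (map (\<lambda>i. if i<0 then mul a a else mul t a) [0..<k]) \<in> Im (mul a a)"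
    using Q[of 0] aa ta by simp
  moreover have "map (\<lambda>i. if i<(0::nat) then mul a a else mul t a) [0..<k] = replicate k (mul t a)"
    by (simp add: map_replicate_const)
  ultimately have "mul t a \<in> Im (mul a a)" using idem2[OF ta] by simp
  then obtain z where z: "z\<in>A" "mul t a = Fc (map (\<lambda>i. if i=0 then z else mul a a) [0..<k])"
    unfolding Im_def by blast
  obtain u where u: "u\<in>A" "mul u a = z" using rsolve[OF aA z(1)] by blast
  define U where "U = (\<lambda>i::nat. if i=0 then u else a)"
  have UA: "\<forall>i<k. U i \<in> A" using u aA by (simp add: U_def)
  have e5: "map (\<lambda>i. if i=0 then z else mul a a) [0..<k] = map (\<lambda>i. mul (U i) a) [0..<k]"
    by (rule V_cong) (auto simp: U_def u)
  have "mul t a = mul (Fa (map U [0..<k])) a" using z(2) L2[OF aA UA] unfolding e5 by simp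
  hence "t = Fa (map U [0..<k])" using rcanc[OF tA op0[OF UA] aA] by simp
  moreover have "map U [0..<k] = (replicate k a)[0:=u]" using rep_upd[of 0 k a u] k by (simp add: U_def)
  ultimately show ?thesis using u by auto
qed


theorem mainTheorem18:
  fixes A :: "'a set" and n m k :: nat
    and \<rho> \<sigma> :: "'a list set" and f :: "nat \<Rightarrow> 'a list \<Rightarrow> 'a"
  assumes "finite A"
    and "n \<ge> 3"
    and "strongly_rich A n \<rho>"
    and "\<forall>i < n. is_wnu A k (f i)"
    and "vec_preserves n k f \<rho>"
    and "m \<ge> 3"
    and "totally_reflexive A m \<sigma>"
    and "preserves m k (f 0) \<sigma>"
  shows "\<sigma> = tuples A m"
proof (cases "A = {}")
  case True
  have "tuples A m = {}" using True assms(6) by (auto simp: tuples_def)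
  then show ?thesis using assms(7) by (auto simp: totally_reflexive_def)
next
  case False
  then obtain e where eA: "e \<in> A" by blast
  note n3 = assms(2)
  define R where "R = replicate (n-3) e"
  have rhoT: "\<rho> \<subseteq> tuples A n" using assms(3) by (simp add: strongly_rich_def)
  have U: "\<forall>a\<in>tuples A n. \<forall>j<n. \<exists>!b. b \<in> A \<and> a[j := b] \<in> \<rho>"
    using assms(3) by (simp add: strongly_rich_def)
  have W: "is_wnu A k (f i)" if "i<n" for i using assms(4) that by simp
  have k2: "k \<ge> 2" using W[of 0] n3 by (simp add: is_wnu_def)
  have tup: "[x,y,z]@R \<in> tuples A n" if "x\<in>A" "y\<in>A" "z\<in>A" for x y z
    using that n3 eA by (auto simp: tuples_def R_def)
  have ex2: "\<exists>!z. z\<in>A \<and> [x,y,z]@R \<in> \<rho>" if "x\<in>A" "y\<in>A" for x y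
  proof -
    have "\<exists>!b. b \<in> A \<and> ([x,y,e]@R)[2 := b] \<in> \<rho>" proof -
      have j: "(2::nat) < n" using n3 by simp
      have "\<forall>j<n. \<exists>!b. b \<in> A \<and> ([x,y,e]@R)[j := b] \<in> \<rho>" using U tup[OF that eA] by blast
      from this[rule_format, OF j] show ?thesis .
    qed
    then show ?thesis by simp
  qed
  have ex1: "\<exists>!y. y\<in>A \<and> [x,y,z]@R \<in> \<rho>" if "x\<in>A" "z\<in>A" for x z
  proof -
    have "\<exists>!b. b \<in> A \<and> ([x,e,z]@R)[1 := b] \<in> \<rho>" proof -
      have j: "(1::nat) < n" using n3 by simp
      have "\<forall>j<n. \<exists>!b. b \<in> A \<and> ([x,e,z]@R)[j := b] \<in> \<rho>" using U tup[OF that(1) eA that(2)] by blast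
      from this[rule_format, OF j] show ?thesis .
    qed
    then show ?thesis by simp
  qed
  have ex0: "\<exists>!x. x\<in>A \<and> [x,y,z]@R \<in> \<rho>" if "y\<in>A" "z\<in>A" for y z
  proof -
    have "\<exists>!b. b \<in> A \<and> ([e,y,z]@R)[0 := b] \<in> \<rho>" proof -
      have j: "(0::nat) < n" using n3 by simp
      have "\<forall>j<n. \<exists>!b. b \<in> A \<and> ([e,y,z]@R)[j := b] \<in> \<rho>" using U tup[OF eA that] by blast
      from this[rule_format, OF j] show ?thesis .
    qed
    then show ?thesis by simp
  qed
  define mul where "mul x y = (THE z. z\<in>A \<and> [x,y,z]@R \<in> \<rho>)" for x y
  have mulP: "mul x y \<in> A \<and> [x,y,mul x y]@R \<in> \<rho>" if "x\<in>A" "y\<in>A" for x y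
    unfolding mul_def using theI'[OF ex2[OF that]] .
  have mulU: "mul x y = z" if "x\<in>A" "y\<in>A" "z\<in>A" "[x,y,z]@R \<in> \<rho>" for x y z
    unfolding mul_def using the1_equality[OF ex2[OF that(1,2)]] that(3,4) by blast
  have mulA: "mul x y \<in> A" if "x\<in>A" "y\<in>A" for x y using mulP[OF that] by simp
  have lsolve: "\<exists>y\<in>A. mul x y = z" if "x\<in>A" "z\<in>A" for x z
    using ex1[OF that] mulU that by blast
  have rsolve: "\<exists>x\<in>A. mul x y = z" if "y\<in>A" "z\<in>A" for y z
    using ex0[OF that] mulU that by blast
  have lcanc: "y = y'" if "x\<in>A" "y\<in>A" "y'\<in>A" "mul x y = mul x y'" for x y y'
  proof -
    have "[x,y,mul x y]@R \<in> \<rho>" "[x,y',mul x y]@R \<in> \<rho>" using mulP that by metis+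
    then show ?thesis using ex1[OF that(1) mulA[OF that(1,2)]] that by blast
  qed
  have rcanc: "x = x'" if "x\<in>A" "x'\<in>A" "y\<in>A" "mul x y = mul x' y" for x x' y
  proof -
    have "[x,y,mul x y]@R \<in> \<rho>" "[x',y,mul x y]@R \<in> \<rho>" using mulP that by metis+
    then show ?thesis using ex0[OF that(3) mulA[OF that(1,3)]] that by blast
  qed
  have op: "f i (map v [0..<k]) \<in> A" if "i<n" "\<forall>p<k. v p \<in> A" for i v
  proof -
    have "\<forall>xs. length xs = k \<and> set xs \<subseteq> A \<longrightarrow> f i xs \<in> A"
      using W[OF that(1)] by (auto simp: is_wnu_def is_op_def tuples_def)
    moreover have "set (map v [0..<k]) \<subseteq> A" using that(2) by auto
    ultimately show ?thesis by simp
  qed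
  have idem: "f i (replicate k c) = c" if "i<n" "c\<in>A" for i c
    using W[OF that(1)] that(2) unfolding is_wnu_def by blast
  have wnu: "f i ((replicate k c)[p:=x]) = f i ((replicate k c)[q:=x])"
    if "i<n" "c\<in>A" "x\<in>A" "p<k" "q<k" for i c x p q
  proof -
    have "\<forall>x\<in>A. \<forall>y\<in>A. \<forall>p<k. \<forall>q<k. f i ((replicate k x)[p := y]) = f i ((replicate k x)[q := y])"
      using W[OF that(1)] unfolding is_wnu_def by blast
    then show ?thesis using that(2-5) by blast
  qed
  have H: "f 2 (map (\<lambda>p. mul (x p) (y p)) [0..<k]) = mul (f 0 (map x [0..<k])) (f 1 (map y [0..<k]))"
    if xA: "\<forall>p<k. x p \<in> A" and yA: "\<forall>p<k. y p \<in> A" for x y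
  proof -
    define ts where "ts = map (\<lambda>p. [x p, y p, mul (x p) (y p)] @ R) [0..<k]"
    have "length ts = k \<and> set ts \<subseteq> \<rho>" using xA yA mulP by (auto simp: ts_def)
    then have res: "map (\<lambda>i. f i (map (\<lambda>t. t ! i) ts)) [0..<n] \<in> \<rho>"
      using assms(5) by (simp add: vec_preserves_def)
    have col: "map (\<lambda>t. t ! i) ts = map (\<lambda>p. ([x p, y p, mul (x p) (y p)] @ R) ! i) [0..<k]" for i
      by (simp add: ts_def)
    have "map (\<lambda>i. f i (map (\<lambda>t. t ! i) ts)) [0..<n] =
      [f 0 (map x [0..<k]), f 1 (map y [0..<k]), f 2 (map (\<lambda>p. mul (x p) (y p)) [0..<k])] @ R"
    proof (rule nth_equalityI)
      show "length (map (\<lambda>i. f i (map (\<lambda>t. t ! i) ts)) [0..<n]) = length ([f 0 (map x [0..<k]), f 1 (map y [0..<k]), f 2 (map (\<lambda>p. mul (x p) (y p)) [0..<k])] @ R)"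
        using n3 by (simp add: R_def)
    next
      fix i assume "i < length (map (\<lambda>i. f i (map (\<lambda>t. t ! i) ts)) [0..<n])"
      then have i: "i < n" by simp
      consider "i = 0" | "i = 1" | "i = 2" | "i \<ge> 3" by linarith
      then show "map (\<lambda>i. f i (map (\<lambda>t. t ! i) ts)) [0..<n] ! i = ([f 0 (map x [0..<k]), f 1 (map y [0..<k]), f 2 (map (\<lambda>p. mul (x p) (y p)) [0..<k])] @ R) ! i"
      proof cases
        case 4
        have "map (\<lambda>p. ([x p, y p, mul (x p) (y p)] @ R) ! i) [0..<k] = map (\<lambda>p. e) [0..<k]"
          using 4 i by (simp add: nth_append R_def)
        also have "\<dots> = replicate k e" by (simp add: map_replicate_const)
        finally show ?thesis using 4 i idem[OF i eA] by (simp add: col nth_append R_def)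
      qed (use i n3 in \<open>simp_all add: col numeral_2_eq_2\<close>)
    qed
    with res have r: "[f 0 (map x [0..<k]), f 1 (map y [0..<k]), f 2 (map (\<lambda>p. mul (x p) (y p)) [0..<k])] @ R \<in> \<rho>"
      by simp
    have "f 2 (map (\<lambda>p. mul (x p) (y p)) [0..<k]) \<in> A"
      using op[of 2 "\<lambda>p. mul (x p) (y p)"] n3 xA yA mulA by simp
    then show ?thesis using mulU[OF op[of 0 x] op[of 1 y] _ r] n3 xA yA by simp
  qed
  have surj: "\<exists>u\<in>A. f 0 ((replicate k a)[0:=u]) = t" if "a\<in>A" "t\<in>A" for a t
  proof -
    have k1: "k \<ge> 1" using k2 by simp
    have o0: "f 0 (map v [0..<k]) \<in> A" if "\<forall>p<k. v p \<in> A" for v using op[of 0 v] n3 that by simp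
    have o1: "f 1 (map v [0..<k]) \<in> A" if "\<forall>p<k. v p \<in> A" for v using op[of 1 v] n3 that by simp
    have i0: "f 0 (replicate k c) = c" if "c\<in>A" for c using idem[of 0 c] n3 that by simp
    have i1: "f 1 (replicate k c) = c" if "c\<in>A" for c using idem[of 1 c] n3 that by simp
    have i2: "f 2 (replicate k c) = c" if "c\<in>A" for c using idem[of 2 c] n3 that by simp
    have w0: "f 0 ((replicate k c)[p:=x]) = f 0 ((replicate k c)[q:=x])"
      if "c\<in>A" "x\<in>A" "p<k" "q<k" for c x p q using wnu[of 0 c x p q] n3 that by simp
    show ?thesis
      by (rule surj_core[where mul=mul and Fa="f 0" and Fb="f 1" and Fc="f 2", OF k1 mulA lsolve rsolve lcanc rcanc
          o0 o1 i0 i1 i2 w0 H that])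
  qed
  show ?thesis
  proof
    show "\<sigma> \<subseteq> tuples A m" using assms(7) by (simp add: totally_reflexive_def)
  next
    show "tuples A m \<subseteq> \<sigma>"
    proof
      fix t assume tT: "t \<in> tuples A m"
      then have lt: "length t = m" and tA: "set t \<subseteq> A" by (auto simp: tuples_def)
      have tiA: "t ! i \<in> A" if "i < m" for i using tA lt that nth_mem by blast
      have TR: "s \<in> \<sigma>" if "s \<in> tuples A m" "card (set s) < m" for s
        using assms(7) that by (simp add: totally_reflexive_def)
      show "t \<in> \<sigma>"
      proof (cases "card (set t) < m")
        case True then show ?thesis using TR tT by simp
      next
        case False
        define a1 where "a1 = t ! 0"
        define a2 where "a2 = t ! 1"
        define a3 where "a3 = t ! 2"
        have a123: "a1 \<in> A" "a2 \<in> A" "a3 \<in> A" using tiA assms(6) by (simp_all add: a1_def a2_def a3_def)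
        obtain y1 where y1: "y1 \<in> A" "f 0 ((replicate k a2)[0:=y1]) = a1" using surj a123 by blast
        obtain y3 where y3: "y3 \<in> A" "f 0 ((replicate k a2)[0:=y3]) = a3" using surj a123 by blast
        have y3': "f 0 ((replicate k a2)[1:=y3]) = a3"
          using y3 wnu[of 0 a2 y3 1 0] n3 k2 a123 by simp
        define col where "col i p = (if i = (0::nat) then (if p = (0::nat) then y1 else a2)
             else if i = 2 then (if p = 1 then y3 else a2) else t ! i)" for i p
        define ts where "ts = map (\<lambda>p. map (\<lambda>i. col i p) [0..<m]) [0..<k]"
        have colA: "col i p \<in> A" if "i < m" for i p using that tiA y1 y3 a123 by (simp add: col_def)
        have rows: "set ts \<subseteq> \<sigma>"
        proof
          fix r assume "r \<in> set ts"
          then obtain p where r: "r = map (\<lambda>i. col i p) [0..<m]" by (auto simp: ts_def)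
          have rT: "r \<in> tuples A m" using colA by (auto simp: r tuples_def)
          have nd: "\<not> distinct r"
          proof
            assume d: "distinct r"
            have lr: "length r = m" by (simp add: r)
            show False
            proof (cases "p = 0")
              case True
              have "r ! 1 = r ! 2" using True assms(6) by (simp add: r col_def a2_def)
              then show False using d lr assms(6) nth_eq_iff_index_eq[of r 1 2] by simp
            next
              case False
              have "r ! 0 = r ! 1" using False assms(6) by (simp add: r col_def a2_def)
              then show False using d lr assms(6) nth_eq_iff_index_eq[of r 0 1] by simp
            qed
          qed
          have "card (set r) < m"
          proof -
            have "card (set r) \<le> length r" by (rule card_length)
            moreover have "card (set r) \<noteq> length r" using nd card_distinct by blast
            ultimately show ?thesis by (simp add: r)
          qed
          then show "r \<in> \<sigma>" using TR rT by simp
        qed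
        have "map (\<lambda>i. f 0 (map (\<lambda>r. r ! i) ts)) [0..<m] \<in> \<sigma>"
        proof -
          have P: "\<forall>ts. length ts = k \<and> set ts \<subseteq> \<sigma> \<longrightarrow> map (\<lambda>i. f 0 (map (\<lambda>t. t ! i) ts)) [0..<m] \<in> \<sigma>"
            using assms(8) unfolding preserves_def vec_preserves_def .
          have "length ts = k" by (simp add: ts_def)
          then show ?thesis using P rows by blast
        qed
        moreover have "map (\<lambda>i. f 0 (map (\<lambda>r. r ! i) ts)) [0..<m] = t"
        proof (rule nth_equalityI)
          show "length (map (\<lambda>i. f 0 (map (\<lambda>r. r ! i) ts)) [0..<m]) = length t" using lt by simp
        next
          fix i assume "i < length (map (\<lambda>i. f 0 (map (\<lambda>r. r ! i) ts)) [0..<m])"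
          then have i: "i < m" by simp
          have cl: "map (\<lambda>r. r ! i) ts = map (col i) [0..<k]" using i by (simp add: ts_def)
          have "f 0 (map (col i) [0..<k]) = t ! i"
          proof -
            consider "i = 0" | "i = 2" | "i \<noteq> 0 \<and> i \<noteq> 2" by blast
            then show ?thesis
            proof cases
              case 1
              have "map (col i) [0..<k] = (replicate k a2)[0:=y1]"
                using rep_upd[of 0 k a2 y1] k2 1 by (simp add: col_def)
              then show ?thesis using y1 1 by (simp add: a1_def)
            next
              case 2
              have "map (col i) [0..<k] = (replicate k a2)[1:=y3]"
                using rep_upd[of 1 k a2 y3] k2 2 by (simp add: col_def)
              then show ?thesis using y3' 2 by (simp add: a3_def)
            next
              case 3
              have "map (col i) [0..<k] = replicate k (t ! i)"
              proof -
                have "col i = (\<lambda>p. t ! i)" using 3 by (auto simp: col_def)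
                then show ?thesis by (simp add: map_replicate_const)
              qed
              then show ?thesis using idem[of 0 "t ! i"] n3 tiA[OF i] by simp
            qed
          qed
          then show "map (\<lambda>i. f 0 (map (\<lambda>r. r ! i) ts)) [0..<m] ! i = t ! i" using i cl by simp
        qed
        ultimately show ?thesis by simp
      qed
    qed
  qed
qed

end
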